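(* Let $f \in \mathbb{N}_0[x^{\pm 1}]$ be such that $f(1)$ is a prime number. Then $f$ is irreducible in $\mathbb{N}_0[x^{\pm 1}]$.
   Context: $\mathbb{N}_0[x^{\pm 1}]$ denotes the semiring of Laurent polynomials in $x$ with nonnegative integer coefficients. Its units are exactly the monomials $x^k$, $k \in \mathbb{Z}$. An element $f$ is irreducible if it is nonzero, not a unit, and whenever $f = gh$ with $g,h \in \mathbb{N}_0[x^{\pm 1}]$, one of $g,h$ is a unit. *)

theory Defs
  imports "HOL-Library.Poly_Mapping" "HOL-Computational_Algebra.Computational_Algebra"
begin

text \<open>The semiring N_0[x^{+-1}] of Laurent polynomials with nonnegative integer
coefficients is modelled as the monoid semiring of (int, +) over nat:
a finitely supported map from exponents k::int to coefficients.\<close>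

type_synonym laurent_N0 = "int \<Rightarrow>\<^sub>0 nat"

definition eval_at_one :: "laurent_N0 \<Rightarrow> nat" where
  "eval_at_one f = (\<Sum>k\<in>Poly_Mapping.keys f. Poly_Mapping.lookup f k)"

end

theory Submission
  imports Defs
begin

lemma eval_add: "eval_at_one (p + q) = eval_at_one p + eval_at_one q"
  unfolding eval_at_one_def
  by (rule setsum_keys_plus_distrib[where f="\<lambda>k v. v"]) auto

lemma eval_single: "eval_at_one (Poly_Mapping.single k a) = a"
  unfolding eval_at_one_def by auto

lemma eval_zero: "eval_at_one 0 = 0"
  unfolding eval_at_one_def by auto

lemma update_eq: "a \<notin> Poly_Mapping.keys f \<Longrightarrow>
   Poly_Mapping.update a b f = f + Poly_Mapping.single a b"
  by (rule poly_mapping_eqI)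
     (auto simp: lookup_update lookup_add lookup_single in_keys_iff when_def)

lemma eval_mult_single:
  "eval_at_one (Poly_Mapping.single k a * (g::laurent_N0)) = a * eval_at_one g"
proof (induction g rule: update_induct)
  case const
  then show ?case by (simp add: eval_zero)
next
  case (update c b f)
  then show ?case
    by (simp add: update_eq distrib_left eval_add mult_single eval_single)
qed

lemma eval_mult: "eval_at_one ((f::laurent_N0) * g) = eval_at_one f * eval_at_one g"
proof (induction f rule: update_induct)
  case const
  then show ?case by (simp add: eval_zero)
next
  case (update c b f)
  then show ?case
    by (simp add: update_eq distrib_right eval_add eval_mult_single eval_single)
qed

lemma eval_one_unit:
  assumes "eval_at_one (g::laurent_N0) = 1"
  shows "g dvd 1"
proof -
  have fin: "finite (Poly_Mapping.keys g)" by simp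
  have ne: "Poly_Mapping.keys g \<noteq> {}"
    using assms unfolding eval_at_one_def by auto
  then obtain k where k: "k \<in> Poly_Mapping.keys g" by blast
  have s: "Poly_Mapping.lookup g k + (\<Sum>j\<in>Poly_Mapping.keys g - {k}. Poly_Mapping.lookup g j) = 1"
    using assms sum.remove[OF fin k, of "Poly_Mapping.lookup g"] unfolding eval_at_one_def by simp
  have pos: "Poly_Mapping.lookup g k \<ge> 1" using k by (simp add: in_keys_iff)
  have "(\<Sum>j\<in>Poly_Mapping.keys g - {k}. Poly_Mapping.lookup g j) = 0" using s pos by linarith
  then have "\<forall>j\<in>Poly_Mapping.keys g - {k}. Poly_Mapping.lookup g j = 0" using fin by simp
  then have keys: "Poly_Mapping.keys g = {k}" using k by (auto simp: in_keys_iff)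
  have "Poly_Mapping.lookup g k = 1" using s pos keys by simp
  then have "g = Poly_Mapping.single k 1"
    using keys by (intro poly_mapping_eqI) (auto simp: lookup_single when_def in_keys_iff)
  then have "g * Poly_Mapping.single (-k) 1 = 1"
    by (simp only: mult_single) (simp del: One_nat_def)
  then show ?thesis by (metis dvdI)
qed

theorem lemma2p1:
  fixes f :: laurent_N0
  assumes "prime (eval_at_one f)"
  shows "irreducible f"
proof -
  have nz: "f \<noteq> 0" using assms by (auto simp: eval_zero)
  have nu: "\<not> f dvd 1"
  proof
    assume "f dvd 1"
    then obtain h where "1 = f * h" by (auto elim: dvdE)
    then have "eval_at_one f * eval_at_one h = 1"
      by (metis eval_mult eval_single single_one)
    then have "eval_at_one f = 1" by simp
    then show False using assms by simp
  qed
  have "a dvd 1 \<or> b dvd 1" if "f = a * b" for a b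
  proof -
    have "eval_at_one f = eval_at_one a * eval_at_one b" using that eval_mult by simp
    then have "eval_at_one a = 1 \<or> eval_at_one b = 1"
      using assms by (metis prime_product)
    then show ?thesis using eval_one_unit by blast
  qed
  then show ?thesis using nz nu by (auto simp: irreducible_def)
qed

end
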